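(* Let $r>1$ and integers $N,K\ge1$. Let $\gamma(r,K,N)$ be the supremum of $$\frac{p^K}{z^K}\sum_{i=1}^{K-1}\frac{z^i}{\sum_{j=i}^Kp^j}$$ over all $p=(p^1,\dots,p^K)$ with $rp^K\ge1$, $\sum_{i=1}^Kp^i=1$, $p^i>0$ for all $i$, where $z^i=(\sum_{j=1}^ip^j)^N-(\sum_{j=1}^{i-1}p^j)^N$. Then $\eta(r,K,N)=\gamma(r,K,N)/(1+\gamma(r,K,N))$.
   Context: Single item auction with $N$ buyers whose values are i.i.d., each taking values $0<x^1<\dots<x^K$ with probabilities $p^i>0$, $\sum_ip^i=1$. With $z^i$ as in the claim and reserve index $t(x,p)=\max\{i: i\in\arg\max_{1\le k\le K}x^k\sum_{j=k}^Kp^j\}$, the efficiency loss ratio of the welfare-maximizing revenue-optimal auction is $\mathrm{ELR}_N(x,p)=\sum_{i=1}^{t(x,p)-1}z^ix^i/\sum_{i=1}^Kz^ix^i$. $\eta(r,K,N)$ is the supremum of $\mathrm{ELR}_N(x,p)$ over all such $p$ and all $x$ with $0<x^1<\dots<x^K\le rx^1$. *)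

theory Defs
  imports Complex_Main
begin

text \<open>Value distributions are indexed 1..K: probabilities p i and values x i
  for i in {1..K} (values outside this range are irrelevant).\<close>

definition zz :: "nat \<Rightarrow> (nat \<Rightarrow> real) \<Rightarrow> nat \<Rightarrow> real" where
  "zz N p i = (\<Sum>j\<in>{1..i}. p j) ^ N - (\<Sum>j\<in>{1..<i}. p j) ^ N"

definition valid_prob :: "nat \<Rightarrow> (nat \<Rightarrow> real) \<Rightarrow> bool" where
  "valid_prob K p \<longleftrightarrow> (\<forall>i\<in>{1..K}. p i > 0) \<and> (\<Sum>i\<in>{1..K}. p i) = 1"

definition valid_values :: "real \<Rightarrow> nat \<Rightarrow> (nat \<Rightarrow> real) \<Rightarrow> bool" where
  "valid_values r K x \<longleftrightarrow> 0 < x 1 \<and> (\<forall>i\<in>{1..K}. \<forall>j\<in>{1..K}. i < j \<longrightarrow> x i < x j)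
     \<and> x K \<le> r * x 1"

definition revenue :: "nat \<Rightarrow> (nat \<Rightarrow> real) \<Rightarrow> (nat \<Rightarrow> real) \<Rightarrow> nat \<Rightarrow> real" where
  "revenue K x p k = x k * (\<Sum>j\<in>{k..K}. p j)"

definition reserve_idx :: "nat \<Rightarrow> (nat \<Rightarrow> real) \<Rightarrow> (nat \<Rightarrow> real) \<Rightarrow> nat" where
  "reserve_idx K x p = Max {i\<in>{1..K}. \<forall>k\<in>{1..K}. revenue K x p k \<le> revenue K x p i}"

definition ELR :: "nat \<Rightarrow> nat \<Rightarrow> (nat \<Rightarrow> real) \<Rightarrow> (nat \<Rightarrow> real) \<Rightarrow> real" where
  "ELR N K x p = (\<Sum>i\<in>{1..<reserve_idx K x p}. zz N p i * x i) / (\<Sum>i\<in>{1..K}. zz N p i * x i)"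

definition eta :: "real \<Rightarrow> nat \<Rightarrow> nat \<Rightarrow> real" where
  "eta r K N = Sup {ELR N K x p | x p. valid_prob K p \<and> valid_values r K x}"

definition gamma :: "real \<Rightarrow> nat \<Rightarrow> nat \<Rightarrow> real" where
  "gamma r K N = Sup {p K / zz N p K * (\<Sum>i\<in>{1..K-1}. zz N p i / (\<Sum>j\<in>{i..K}. p j))
      | p. r * p K \<ge> 1 \<and> valid_prob K p}"

end

theory Submission
  imports Defs
begin


lemma tele:
  fixes H :: "nat \<Rightarrow> real"
  shows "a \<le> Suc b \<Longrightarrow> (\<Sum>i=a..b. H i - H (i - 1)) = H b - H (a - 1)"
proof (induction b)
  case 0 thus ?case by (cases a) auto
next
  case (Suc b)
  show ?case
  proof (cases "a = Suc (Suc b)")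
    case True thus ?thesis by simp
  next
    case False
    hence "a \<le> Suc b" using Suc.prems by simp
    thus ?thesis using Suc.IH by simp
  qed
qed

lemma lt_ivl: "sum (p::nat\<Rightarrow>real) {1..<i} = sum p {1..i-1}"
  by (cases i) (auto simp: atLeastLessThanSuc_atLeastAtMost)

lemma F_diff: "1 \<le> j \<Longrightarrow> sum (p::nat\<Rightarrow>real) {1..j} - sum p {1..j-1} = p j"
  by (cases j) auto

lemma F_sub: "i \<le> j \<Longrightarrow> sum (p::nat\<Rightarrow>real) {1..j} - sum p {1..i} = sum p {Suc i..j}"
proof -
  assume "i \<le> j"
  have "(\<Sum>l=Suc i..j. sum p {1..l} - sum p {1..l-1}) = sum p {1..j} - sum p {1..Suc i - 1}"
    using \<open>i \<le> j\<close> by (intro tele) simp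
  moreover have "(\<Sum>l=Suc i..j. sum p {1..l} - sum p {1..l-1}) = sum p {Suc i..j}"
    by (intro sum.cong refl F_diff) auto
  ultimately show ?thesis by simp
qed

lemma tail: assumes "valid_prob K p" "1 \<le> i" "i \<le> Suc K"
  shows "sum p {i..K} = 1 - sum p {1..i-1}"
proof -
  have "sum p {1..K} - sum p {1..i-1} = sum p {Suc (i-1)..K}"
    using assms by (intro F_sub) auto
  moreover have "Suc (i-1) = i" using assms by simp
  ultimately show ?thesis using assms(1) unfolding valid_prob_def by simp
qed

lemma F_nonneg: assumes "valid_prob K p" "i \<le> K" shows "0 \<le> sum p {1..i}"
  using assms unfolding valid_prob_def by (intro sum_nonneg) (auto intro: less_imp_le)

lemma F_less: assumes "valid_prob K p" "i < j" "j \<le> K" shows "sum p {1..i} < sum p {1..j}"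
proof -
  have "sum p {1..j} - sum p {1..i} = sum p {Suc i..j}" using assms by (intro F_sub) auto
  moreover have "sum p {Suc i..j} > 0"
    using assms unfolding valid_prob_def by (intro sum_pos) auto
  ultimately show ?thesis by simp
qed

lemma F_le1: assumes "valid_prob K p" "i \<le> K" shows "sum p {1..i} \<le> 1"
  using F_less[OF assms(1), of i K] assms unfolding valid_prob_def by (cases "i = K") auto

lemma S_pos: assumes "valid_prob K p" "1 \<le> i" "i \<le> K" shows "sum p {i..K} > 0"
  using assms unfolding valid_prob_def by (intro sum_pos) auto

lemma zz_alt: "zz N p i = sum p {1..i} ^ N - sum p {1..i-1} ^ N"
  unfolding zz_def lt_ivl ..

lemma zz_nonneg: assumes "valid_prob K p" "1 \<le> i" "i \<le> K" shows "zz N p i \<ge> 0"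
proof -
  have "sum p {1..i-1} \<le> sum p {1..i}" using F_less[OF assms(1), of "i-1" i] assms by simp
  moreover have "0 \<le> sum p {1..i-1}" using F_nonneg[OF assms(1), of "i-1"] assms by simp
  ultimately show ?thesis unfolding zz_alt by (simp add: power_mono)
qed



definition gv :: "nat \<Rightarrow> nat \<Rightarrow> (nat \<Rightarrow> real) \<Rightarrow> real" where
  "gv N K q = q K / zz N q K * (\<Sum>i\<in>{1..K-1}. zz N q i / (\<Sum>j\<in>{i..K}. q j))"

lemma zzK_pos: assumes "valid_prob K q" "K \<ge> 1" "N \<ge> 1" shows "zz N q K > 0"
proof -
  have a: "sum q {1..K} = 1" using assms unfolding valid_prob_def by simp
  have "sum q {1..K-1} < 1" using F_less[OF assms(1), of "K-1" K] a assms by simp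
  moreover have "0 \<le> sum q {1..K-1}" using F_nonneg[OF assms(1), of "K-1"] by simp
  ultimately have "sum q {1..K-1} ^ N < 1"
    using assms(3) by (simp add: power_less_one_iff)
  thus ?thesis unfolding zz_alt a by simp
qed

lemma gv_nonneg: assumes "valid_prob K q" shows "gv N K q \<ge> 0"
proof -
  have a: "0 \<le> q K" using assms unfolding valid_prob_def
    by (cases "K = 0") (auto intro: less_imp_le)
  have b: "0 \<le> zz N q K"
  proof (cases "K = 0")
    case True thus ?thesis by (simp add: zz_def)
  next
    case False thus ?thesis by (intro zz_nonneg[OF assms]) auto
  qed
  have c: "0 \<le> zz N q i / sum q {i..K}" if i: "i \<in> {1..K-1}" for i
  proof -
    have "0 \<le> zz N q i" using i assms by (intro zz_nonneg) auto
    moreover have "0 < sum q {i..K}" using i by (intro S_pos[OF assms]) auto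
    ultimately show ?thesis by simp
  qed
  show ?thesis unfolding gv_def by (rule mult_nonneg_nonneg[OF divide_nonneg_nonneg[OF a b] sum_nonneg]) (rule c)
qed

lemma lower:
  assumes "N \<ge> 1" "K \<ge> 1" "valid_prob K q" "r * q K \<ge> 1"
  shows "\<exists>x. valid_values r K x \<and> ELR N K x q = gv N K q / (1 + gv N K q)"
proof -
  define S where "S i = sum q {i..K}" for i
  define x where "x i = q K / S i" for i
  have Spos: "\<And>i. 1 \<le> i \<Longrightarrow> i \<le> K \<Longrightarrow> S i > 0" unfolding S_def using S_pos[OF assms(3)] by auto
  have S1: "S 1 = 1" using assms unfolding S_def valid_prob_def by simp
  have SK: "S K = q K" unfolding S_def by simp
  have qK: "q K > 0" using assms unfolding valid_prob_def by auto
  have Sdec: "S j < S i" if "1 \<le> i" "i < j" "j \<le> K" for i j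
  proof -
    have "S i = 1 - sum q {1..i-1}" "S j = 1 - sum q {1..j-1}"
      unfolding S_def using that tail[OF assms(3)] by auto
    moreover have "sum q {1..i-1} < sum q {1..j-1}" using that by (intro F_less[OF assms(3)]) auto
    ultimately show ?thesis by simp
  qed
  have rev: "revenue K x q k = q K" if "1 \<le> k" "k \<le> K" for k
    unfolding revenue_def x_def S_def[symmetric] using Spos[OF that] by simp
  have "{i\<in>{1..K}. \<forall>k\<in>{1..K}. revenue K x q k \<le> revenue K x q i} = {1..K}"
    using rev by auto
  hence t: "reserve_idx K x q = K" unfolding reserve_idx_def using assms by (auto intro!: Max_eqI)
  have vv: "valid_values r K x"
    unfolding valid_values_def
  proof (intro conjI ballI impI)
    show "0 < x 1" unfolding x_def using qK S1 by simp
    show "x K \<le> r * x 1" unfolding x_def using S1 SK qK assms(4) by simp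
    fix i j assume "i \<in> {1..K}" "j \<in> {1..K}" "i < j"
    thus "x i < x j" unfolding x_def using Sdec[of i j] Spos[of j] qK
      by (auto intro!: divide_strict_left_mono)
  qed
  define \<Sigma> where "\<Sigma> = (\<Sum>i\<in>{1..K-1}. zz N q i / S i)"
  have num: "(\<Sum>i\<in>{1..<K}. zz N q i * x i) = q K * \<Sigma>"
    unfolding \<Sigma>_def x_def sum_distrib_left lt_ivl by (intro sum.cong) auto
  have "{1..K} = insert K {1..<K}" using assms by auto
  hence den: "(\<Sum>i\<in>{1..K}. zz N q i * x i) = q K * \<Sigma> + zz N q K"
    using num x_def SK qK by simp
  have zK: "zz N q K > 0" using zzK_pos assms by simp
  have gv: "gv N K q = q K / zz N q K * \<Sigma>" unfolding gv_def \<Sigma>_def S_def ..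
  have "ELR N K x q = q K * \<Sigma> / (q K * \<Sigma> + zz N q K)"
    unfolding ELR_def t num den ..
  also have "\<dots> = gv N K q / (1 + gv N K q)"
    unfolding gv using zK by (simp add: field_simps)
  finally show ?thesis using vv by blast
qed



lemma div_ge_self: "0 \<le> (a::real) \<Longrightarrow> 0 < d \<Longrightarrow> d \<le> 1 \<Longrightarrow> a \<le> a / d"
  by (simp add: le_divide_eq mult_left_le)

lemma split_q:
  assumes N: "N \<ge> 1" and vp: "valid_prob K p" and t2: "2 \<le> t" and tK: "t \<le> K"
  shows "\<exists>q. valid_prob K q \<and> q K = sum p {t..K} \<and>
     sum p {t..K} * (\<Sum>i\<in>{1..t-1}. zz N p i / sum p {i..K}) / (1 - sum p {1..t-1} ^ N) \<le> gv N K q"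
proof -
  define F where "F i = sum p {1..i}" for i
  define m where "m = K + 1 - t"
  have m1: "1 \<le> m" and mK: "m < K" using t2 tK unfolding m_def by auto
  define G where "G i = (if i \<le> m then real i * p 1 / real m else if i < K then F (i + 1 - m) else 1)" for i
  define q where "q i = G i - G (i - 1)" for i
  have p1: "p 1 > 0" using vp tK t2 unfolding valid_prob_def by auto
  have FK: "F K = 1" using vp unfolding valid_prob_def F_def by simp
  have F1: "F 1 = p 1" unfolding F_def by simp
  have GF: "G i = F (i + 1 - m)" if "m \<le> i" "i < K" for i
    using that m1 F1 unfolding G_def by (cases "i = m") auto
  have G0: "G 0 = 0" unfolding G_def by simp
  have GK: "G K = 1" unfolding G_def using mK by simp
  have Gsum: "sum q {1..i} = G i" for i
    unfolding q_def using tele[of 1 i G] G0 by simp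
  have Ft1: "F (t-1) < 1" using F_less[OF vp, of "t-1" K] t2 tK FK unfolding F_def by simp
  have Ft0: "0 \<le> F (t-1)" using F_nonneg[OF vp, of "t-1"] tK unfolding F_def by simp
  have qpos: "q i > 0" if iK: "1 \<le> i" "i \<le> K" for i
  proof -
    consider "i \<le> m" | "m < i" "i < K" | "i = K" using iK by fastforce
    thus ?thesis
    proof cases
      case 1
      hence "G i = real i * p 1 / real m" "G (i-1) = real (i-1) * p 1 / real m" unfolding G_def by auto
      moreover have "real (i-1) = real i - 1" using iK by simp
      ultimately have "q i = p 1 / real m" unfolding q_def using m1 by (simp add: field_simps)
      thus ?thesis using p1 m1 by simp
    next
      case 2
      have "G i = F (i + 1 - m)" using 2 by (intro GF) auto
      moreover have "G (i-1) = F (i - m)" using GF[of "i-1"] 2 by (simp add: Suc_diff_le)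
      moreover have "F (i + 1 - m) - F (i - m) = p (i + 1 - m)"
        unfolding F_def using F_diff[of "i+1-m" p] 2 by (simp add: Suc_diff_le)
      moreover have "i + 1 - m \<in> {1..K}" using 2 m1 by auto
      hence "p (i + 1 - m) > 0" using vp unfolding valid_prob_def by blast
      ultimately show ?thesis unfolding q_def by simp
    next
      case 3
      have "G (K-1) = F (t-1)" using GF[of "K-1"] mK unfolding m_def using t2 tK
        by (simp add: Suc_diff_le)
      thus ?thesis unfolding q_def 3 GK using Ft1 by simp
    qed
  qed
  have vq: "valid_prob K q" unfolding valid_prob_def using qpos Gsum GK by auto
  have GK1: "G (K-1) = F (t-1)" using GF[of "K-1"] mK unfolding m_def using t2 tK
    by (simp add: Suc_diff_le)
  have St: "sum p {t..K} = 1 - F (t-1)" unfolding F_def using tail[OF vp, of t] t2 tK by simp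
  have qK: "q K = sum p {t..K}" unfolding q_def GK GK1 St ..
  have zq: "zz N q i = G i ^ N - G (i-1) ^ N" for i unfolding zz_alt Gsum ..
  have Sq: "sum q {i..K} = 1 - G (i-1)" if "1 \<le> i" "i \<le> K" for i
    using tail[OF vq, of i] that Gsum by simp
  define \<Sigma>p where "\<Sigma>p = (\<Sum>i\<in>{1..t-1}. zz N p i / sum p {i..K})"
  define f where "f i = (G i ^ N - G (i-1) ^ N) / (1 - G (i-1))" for i
  have gvq: "gv N K q = sum p {t..K} / (1 - F (t-1) ^ N) * (\<Sum>i\<in>{1..K-1}. f i)"
    unfolding gv_def qK zq GK GK1 f_def
    by (intro arg_cong2[where f="(*)"] refl sum.cong) (auto simp: Sq)
  have "{1..K-1} = {1..m} \<union> {Suc m..K-1}" using mK m1 by auto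
  hence split: "(\<Sum>i\<in>{1..K-1}. f i) = (\<Sum>i\<in>{1..m}. f i) + (\<Sum>i\<in>{Suc m..K-1}. f i)"
    by (simp add: sum.union_disjoint)
  have part1: "p 1 ^ N \<le> (\<Sum>i\<in>{1..m}. f i)"
  proof -
    have "(\<Sum>i\<in>{1..m}. G i ^ N - G (i-1) ^ N) = G m ^ N - G 0 ^ N"
      using tele[of 1 m "\<lambda>i. G i ^ N"] m1 by simp
    also have "\<dots> = p 1 ^ N" using G0 N m1 unfolding G_def by simp
    finally have e: "(\<Sum>i\<in>{1..m}. G i ^ N - G (i-1) ^ N) = p 1 ^ N" .
    have "(\<Sum>i\<in>{1..m}. G i ^ N - G (i-1) ^ N) \<le> (\<Sum>i\<in>{1..m}. f i)"
    proof (rule sum_mono)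
      fix i assume i: "i \<in> {1..m}"
      have "0 \<le> zz N q i" using i mK by (intro zz_nonneg[OF vq]) auto
      moreover have "0 < sum q {i..K}" using i mK by (intro S_pos[OF vq]) auto
      moreover have "0 \<le> G (i-1)" using F_nonneg[OF vq, of "i-1"] Gsum i mK by fastforce
      ultimately show "G i ^ N - G (i-1) ^ N \<le> f i"
        unfolding f_def zq using Sq[of i] i mK by (intro div_ge_self) auto
    qed
    thus ?thesis using e by simp
  qed
  have part2: "(\<Sum>i\<in>{Suc m..K-1}. f i) = (\<Sum>j\<in>{2..t-1}. zz N p j / sum p {j..K})"
  proof -
    have eq: "{Suc m..K-1} = {2 + (m-1)..(t-1) + (m-1)}" using m1 t2 tK unfolding m_def by auto
    have "(\<Sum>i\<in>{Suc m..K-1}. f i) = (\<Sum>j\<in>{2..t-1}. f (j + (m-1)))"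
      unfolding eq by (rule sum.shift_bounds_cl_nat_ivl)
    also have "\<dots> = (\<Sum>j\<in>{2..t-1}. zz N p j / sum p {j..K})"
    proof (rule sum.cong)
      fix j assume j: "j \<in> {2..t-1}"
      have "G (j + (m-1)) = F j" using GF[of "j + (m-1)"] j m1 t2 tK unfolding m_def by auto
      moreover have "G (j + (m-1) - 1) = F (j-1)" using GF[of "j + (m-1) - 1"] j m1 t2 tK unfolding m_def by auto
      moreover have "sum p {j..K} = 1 - F (j-1)" unfolding F_def using tail[OF vp, of j] j tK by fastforce
      ultimately show "f (j + (m-1)) = zz N p j / sum p {j..K}"
        unfolding f_def zz_alt F_def by simp
    qed simp
    finally show ?thesis .
  qed
  have "{1..t-1} = insert 1 {2..t-1}" using t2 by auto
  moreover have "zz N p 1 / sum p {1..K} = p 1 ^ N"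
    using vp N unfolding zz_def valid_prob_def by simp
  ultimately have Sp: "\<Sigma>p = p 1 ^ N + (\<Sum>j\<in>{2..t-1}. zz N p j / sum p {j..K})"
    unfolding \<Sigma>p_def by simp
  have le: "\<Sigma>p \<le> (\<Sum>i\<in>{1..K-1}. f i)" using Sp split part1 part2 by simp
  have "F (t-1) ^ N < 1" using Ft0 Ft1 N by (simp add: power_less_one_iff)
  moreover have "sum p {t..K} > 0" using St Ft1 by simp
  ultimately have coef: "0 \<le> sum p {t..K} / (1 - F (t-1) ^ N)" by simp
  have "sum p {t..K} * \<Sigma>p / (1 - F (t-1) ^ N) = sum p {t..K} / (1 - F (t-1) ^ N) * \<Sigma>p" by simp
  also have "\<dots> \<le> gv N K q" unfolding gvq using coef le by (rule mult_left_mono[rotated])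
  finally show ?thesis using vq qK unfolding \<Sigma>p_def F_def by blast
qed



lemma frac_bound:
  fixes A B c g :: real
  assumes "0 \<le> A" "0 < c" "A \<le> c * g" "c \<le> B" "0 \<le> g"
  shows "A / (A + B) \<le> g / (1 + g)"
proof -
  have "A \<le> g * B" using assms by (smt (verit) mult.commute mult_left_mono)
  hence "A * (1 + g) \<le> g * (A + B)" by (simp add: algebra_simps)
  thus ?thesis using assms by (simp add: divide_simps)
qed

lemma fmono: fixes a b :: real assumes "0 \<le> a" "a \<le> b" shows "a / (1 + a) \<le> b / (1 + b)"
proof -
  have "a * (1 + b) \<le> b * (1 + a)" using assms by (simp add: algebra_simps)
  moreover have "0 < 1 + a" "0 < 1 + b" using assms by auto
  ultimately show ?thesis by (simp add: divide_simps)
qed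

lemma upper_ELR:
  assumes N: "N \<ge> 1" and K: "K \<ge> 1" and vp: "valid_prob K p" and vx: "valid_values r K x"
  shows "ELR N K x p = 0 \<or> (\<exists>q. r * q K \<ge> 1 \<and> valid_prob K q \<and> ELR N K x p \<le> gv N K q / (1 + gv N K q))"
proof -
  define t where "t = reserve_idx K x p"
  define R where "R = revenue K x p"
  define M where "M = {i\<in>{1..K}. \<forall>k\<in>{1..K}. R k \<le> R i}"
  have "Max (R ` {1..K}) \<in> R ` {1..K}" using K by (intro Max_in) auto
  then obtain i0 where i0: "i0 \<in> {1..K}" "R i0 = Max (R ` {1..K})" by auto
  have "i0 \<in> M" unfolding M_def using i0 by auto
  hence "t \<in> M" unfolding t_def reserve_idx_def R_def[symmetric] M_def[symmetric]
    by (intro Max_in) (auto simp: M_def)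
  hence t1: "1 \<le> t" and tK: "t \<le> K" and revt: "\<And>k. k \<in> {1..K} \<Longrightarrow> R k \<le> R t"
    unfolding M_def by auto
  show ?thesis
  proof (cases "t = 1")
    case True thus ?thesis unfolding ELR_def t_def[symmetric] by simp
  next
    case False
    hence t2: "2 \<le> t" using t1 by simp
    define F where "F i = sum p {1..i}" for i
    define S where "S i = sum p {i..K}" for i
    have xpos: "0 < x i" if "i \<in> {1..K}" for i
    proof (cases "i = 1")
      case False thus ?thesis using vx that unfolding valid_values_def
        by (metis atLeastAtMost_iff le_neq_implies_less less_trans K order_refl)
    qed (use vx in \<open>auto simp: valid_values_def\<close>)
    have xmono: "x i \<le> x j" if "i \<in> {1..K}" "j \<in> {1..K}" "i \<le> j" for i j
      using vx that unfolding valid_values_def by (cases "i = j") (auto intro: less_imp_le)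
    have Spos: "S i > 0" if "i \<in> {1..K}" for i using S_pos[OF vp] that unfolding S_def by auto
    have S1: "S 1 = 1" using vp unfolding S_def valid_prob_def by simp
    have St: "S t = 1 - F (t-1)" unfolding S_def F_def using tail[OF vp, of t] t1 tK by simp
    have FK: "F K = 1" using vp unfolding F_def valid_prob_def by simp
    have revS: "x k * S k \<le> x t * S t" if "k \<in> {1..K}" for k
      using revt[OF that] unfolding R_def revenue_def S_def .
    have xt: "0 < x t" using xpos t1 tK by simp
    have rSt: "1 \<le> r * S t"
    proof -
      have "x 1 \<le> x t * S t" using revS[of 1] S1 K by simp
      moreover have "x t \<le> x K" using xmono t1 tK by simp
      moreover have "x K \<le> r * x 1" using vx unfolding valid_values_def by simp
      moreover have "r \<ge> 0"
      proof -
        have "0 < x K" using xpos[of K] K by simp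
        hence "0 < r * x 1" using vx unfolding valid_values_def by linarith
        moreover have "0 < x 1" using vx unfolding valid_values_def by simp
        ultimately show ?thesis by (simp add: zero_less_mult_iff)
      qed
      ultimately have "x t \<le> r * (x t * S t)" by (smt (verit) mult_left_mono)
      hence "x t * 1 \<le> x t * (r * S t)" by (simp add: algebra_simps)
      thus ?thesis using xt by (simp add: mult_le_cancel_left_pos)
    qed
    define \<Sigma>p where "\<Sigma>p = (\<Sum>i\<in>{1..t-1}. zz N p i / sum p {i..K})"
    define A where "A = (\<Sum>i\<in>{1..<t}. zz N p i * x i)"
    define B where "B = (\<Sum>i\<in>{t..K}. zz N p i * x i)"
    have "{1..K} = {1..<t} \<union> {t..K}" using t1 tK by auto
    moreover have "(\<Sum>i\<in>{1..<t} \<union> {t..K}. zz N p i * x i) = A + B" unfolding A_def B_def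
      by (rule sum.union_disjoint) auto
    ultimately have den: "(\<Sum>i\<in>{1..K}. zz N p i * x i) = A + B" by simp
    have Ft1: "F (t-1) < 1" using St Spos[of t] t1 tK by simp
    have Ft0: "0 \<le> F (t-1)" using F_nonneg[OF vp, of "t-1"] tK unfolding F_def by simp
    have FN: "F (t-1) ^ N < 1" using Ft0 Ft1 N by (simp add: power_less_one_iff)
    define c where "c = x t * (1 - F (t-1) ^ N)"
    have cpos: "0 < c" unfolding c_def using xt FN by simp
    have A0: "0 \<le> A" unfolding A_def
      using xpos tK by (intro sum_nonneg mult_nonneg_nonneg zz_nonneg[OF vp]) (auto intro: less_imp_le)
    have Ale: "A \<le> x t * S t * \<Sigma>p"
    proof -
      have "A \<le> (\<Sum>i\<in>{1..t-1}. zz N p i * (x t * S t / S i))"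
        unfolding A_def lt_ivl
      proof (rule sum_mono)
        fix i assume i: "i \<in> {1..t-1}"
        hence iK: "i \<in> {1..K}" using tK by auto
        have "x i \<le> x t * S t / S i" using revS[OF iK] Spos[OF iK] by (simp add: le_divide_eq)
        thus "zz N p i * x i \<le> zz N p i * (x t * S t / S i)"
          using zz_nonneg[OF vp, of i N] iK by (intro mult_left_mono) auto
      qed
      also have "\<dots> = x t * S t * \<Sigma>p" unfolding \<Sigma>p_def sum_distrib_left S_def
        by (intro sum.cong) auto
      finally show ?thesis .
    qed
    have Bge: "c \<le> B"
    proof -
      have "(\<Sum>i\<in>{t..K}. zz N p i) = F K ^ N - F (t-1) ^ N"
        unfolding zz_alt F_def using tele[of t K "\<lambda>i. sum p {1..i} ^ N"] tK by simp
      hence "c = (\<Sum>i\<in>{t..K}. zz N p i * x t)" unfolding c_def FK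
        by (metis (no_types) sum_distrib_right mult.commute power_one)
      also have "\<dots> \<le> B" unfolding B_def
      proof (rule sum_mono)
        fix i assume i: "i \<in> {t..K}"
        thus "zz N p i * x t \<le> zz N p i * x i"
          using zz_nonneg[OF vp, of i N] xmono[of t i] t1 by (intro mult_left_mono) auto
      qed
      finally show ?thesis .
    qed
    define g where "g = S t * \<Sigma>p / (1 - F (t-1) ^ N)"
    have "0 \<le> \<Sigma>p" unfolding \<Sigma>p_def
      using tK by (intro sum_nonneg divide_nonneg_nonneg zz_nonneg[OF vp] less_imp_le[OF S_pos[OF vp]]) auto
    hence g0: "0 \<le> g" unfolding g_def using Spos[of t] t1 tK FN by simp
    have "c * g = x t * S t * \<Sigma>p" unfolding c_def g_def using FN by (simp add: field_simps)
    hence ELRle: "ELR N K x p \<le> g / (1 + g)"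
      unfolding ELR_def t_def[symmetric] den A_def[symmetric]
      using frac_bound[OF A0 cpos _ Bge g0] Ale by simp
    obtain q where q: "valid_prob K q" "q K = S t" "g \<le> gv N K q"
      using split_q[OF N vp t2 tK] unfolding g_def S_def F_def \<Sigma>p_def by blast
    have "g / (1 + g) \<le> gv N K q / (1 + gv N K q)"
      using g0 q(3) by (rule fmono)
    hence "r * q K \<ge> 1 \<and> valid_prob K q \<and> ELR N K x p \<le> gv N K q / (1 + gv N K q)"
      using ELRle q rSt by auto
    thus ?thesis by blast
  qed
qed



lemma q0_ex: assumes r: "r > 1" and K: "K \<ge> 1" shows "\<exists>q. r * q K \<ge> 1 \<and> valid_prob K q"
proof -
  define a where "a = 1 - 1 / r"
  have a0: "0 < a" "a < 1" unfolding a_def using r by (auto simp: field_simps)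
  define q where "q i = (if i = K then 1 - (real K - 1) * a / real K else a / real K)" for i
  have kk: "(real K - 1) * a / real K \<le> a" using K a0 by (simp add: divide_simps)
  have qK: "q K \<ge> 1 - a" unfolding q_def using kk by simp
  have "1 - a = 1 / r" unfolding a_def by simp
  hence "q K \<ge> 1 / r" using qK by simp
  hence "r * q K \<ge> r * (1 / r)" using r by (intro mult_left_mono) auto
  hence rq: "r * q K \<ge> 1" using r by simp
  have qKp: "q K > 0" unfolding q_def using kk a0 by simp
  have pos: "\<forall>i\<in>{1..K}. q i > 0" using qKp a0 K unfolding q_def by auto
  have "{1..K} = insert K {1..K-1}" using K by auto
  hence "sum q {1..K} = q K + sum q {1..K-1}" using K by simp
  also have "sum q {1..K-1} = (\<Sum>i\<in>{1..K-1}. a / real K)" unfolding q_def by (intro sum.cong) auto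
  also have "\<dots> = (real K - 1) * a / real K" using K by (simp add: of_nat_diff)
  finally have "sum q {1..K} = 1" unfolding q_def by simp
  thus ?thesis using rq pos unfolding valid_prob_def by blast
qed

lemma gv_le: assumes N: "N \<ge> 1" and K: "K \<ge> 1" and vq: "valid_prob K q" and rq: "r * q K \<ge> 1"
  shows "gv N K q \<le> r"
proof -
  define F where "F i = sum q {1..i}" for i
  have qK: "q K > 0" using vq K unfolding valid_prob_def by auto
  have FK: "F K = 1" using vq unfolding F_def valid_prob_def by simp
  have FK1: "F (K-1) = 1 - q K" using tail[OF vq, of K] K unfolding F_def by simp
  have F0: "0 \<le> F (K-1)" using F_nonneg[OF vq, of "K-1"] unfolding F_def by simp
  have zK: "zz N q K = 1 - F (K-1) ^ N" unfolding zz_alt F_def[symmetric] FK by simp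
  have "F (K-1) ^ N \<le> F (K-1) ^ 1" using F0 FK1 qK N by (intro power_decreasing) auto
  hence zKge: "q K \<le> zz N q K" unfolding zK using FK1 by simp
  have c1: "q K / zz N q K \<le> 1" using zKge qK by simp
  have "(\<Sum>i\<in>{1..K-1}. zz N q i / sum q {i..K}) \<le> (\<Sum>i\<in>{1..K-1}. zz N q i / q K)"
  proof (rule sum_mono)
    fix i assume i: "i \<in> {1..K-1}"
    have "q K \<le> sum q {i..K}"
      using i vq by (intro member_le_sum) (auto simp: valid_prob_def intro: less_imp_le)
    moreover have "0 \<le> zz N q i" using i by (intro zz_nonneg[OF vq]) auto
    ultimately show "zz N q i / sum q {i..K} \<le> zz N q i / q K"
      using qK by (intro divide_left_mono) auto
  qed
  also have "\<dots> = (\<Sum>i\<in>{1..K-1}. zz N q i) / q K" by (simp add: sum_divide_distrib)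
  also have "(\<Sum>i\<in>{1..K-1}. zz N q i) = F (K-1) ^ N - F 0 ^ N"
    unfolding zz_alt F_def using tele[of 1 "K-1" "\<lambda>i. sum q {1..i} ^ N"] K by simp
  also have "\<dots> \<le> 1"
  proof -
    have "F (K-1) \<le> 1" using FK1 qK by simp
    hence "F (K-1) ^ N \<le> 1" using F0 by (simp add: power_le_one)
    moreover have "F 0 ^ N = 0" unfolding F_def using N by (simp add: power_0_left)
    ultimately show ?thesis by linarith
  qed
  finally have s: "(\<Sum>i\<in>{1..K-1}. zz N q i / sum q {i..K}) \<le> 1 / q K"
    using qK by (simp add: divide_right_mono)
  have s0: "0 \<le> (\<Sum>i\<in>{1..K-1}. zz N q i / sum q {i..K})"
  proof (rule sum_nonneg)
    fix i assume i: "i \<in> {1..K-1}"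
    have "0 \<le> zz N q i" using i by (intro zz_nonneg[OF vq]) auto
    moreover have "0 < sum q {i..K}" using i by (intro S_pos[OF vq]) auto
    ultimately show "0 \<le> zz N q i / sum q {i..K}" by simp
  qed
  have "gv N K q \<le> 1 * (1 / q K)" unfolding gv_def
    using c1 s s0 qK by (intro mult_mono) auto
  also have "\<dots> \<le> r" using rq qK by (simp add: field_simps)
  finally show ?thesis .
qed

theorem lemma2:
  fixes r :: real and K N :: nat
  assumes "r > 1" and "K \<ge> 1" and "N \<ge> 1"
  shows "eta r K N = gamma r K N / (1 + gamma r K N)"
proof -
  define Gs where "Gs = {gv N K q | q. r * q K \<ge> 1 \<and> valid_prob K q}"
  define Es where "Es = {ELR N K x p | x p. valid_prob K p \<and> valid_values r K x}"
  have gam: "gamma r K N = Sup Gs" unfolding gamma_def Gs_def gv_def ..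
  have et: "eta r K N = Sup Es" unfolding eta_def Es_def ..
  obtain q0 where q0: "r * q0 K \<ge> 1" "valid_prob K q0" using q0_ex assms by blast
  have Gne: "Gs \<noteq> {}" unfolding Gs_def using q0 by blast
  have Gbdd: "bdd_above Gs" unfolding Gs_def bdd_above_def using gv_le assms by blast
  have Gup: "g \<le> gamma r K N" if "g \<in> Gs" for g unfolding gam using that Gbdd by (rule cSup_upper)
  have g0: "0 \<le> gamma r K N" using Gup[of "gv N K q0"] gv_nonneg[OF q0(2), of N] q0
    unfolding Gs_def by force
  define \<gamma> where "\<gamma> = gamma r K N"
  have Eup: "e \<le> \<gamma> / (1 + \<gamma>)" if eE: "e \<in> Es" for e
  proof -
    obtain x p where e: "e = ELR N K x p" "valid_prob K p" "valid_values r K x"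
      using eE unfolding Es_def by blast
    from upper_ELR[OF assms(3) assms(2) e(2) e(3)]
    show ?thesis
    proof
      assume "ELR N K x p = 0" thus ?thesis using e g0 unfolding \<gamma>_def by simp
    next
      assume "\<exists>q. r * q K \<ge> 1 \<and> valid_prob K q \<and> ELR N K x p \<le> gv N K q / (1 + gv N K q)"
      then obtain q where q: "r * q K \<ge> 1" "valid_prob K q" "ELR N K x p \<le> gv N K q / (1 + gv N K q)" by blast
      have "gv N K q \<in> Gs" unfolding Gs_def using q by blast
      hence "gv N K q / (1 + gv N K q) \<le> \<gamma> / (1 + \<gamma>)"
        unfolding \<gamma>_def using gv_nonneg[OF q(2)] Gup by (intro fmono) auto
      thus ?thesis using q e by simp
    qed
  qed
  obtain x0 where x0: "valid_values r K x0" "ELR N K x0 q0 = gv N K q0 / (1 + gv N K q0)"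
    using lower[OF assms(3) assms(2) q0(2) q0(1)] by blast
  have Ene: "Es \<noteq> {}" unfolding Es_def using x0 q0 by blast
  have Ebdd: "bdd_above Es" using Eup unfolding bdd_above_def by blast
  have etale: "eta r K N \<le> \<gamma> / (1 + \<gamma>)" unfolding et using Ene Eup by (rule cSup_least)
  have "\<gamma> / (1 + \<gamma>) < 1" using g0 unfolding \<gamma>_def by simp
  hence eta1: "eta r K N < 1" using etale by simp
  define \<eta> where "\<eta> = eta r K N"
  have "g \<le> \<eta> / (1 - \<eta>)" if gG: "g \<in> Gs" for g
  proof -
    obtain q where q: "g = gv N K q" "r * q K \<ge> 1" "valid_prob K q" using gG unfolding Gs_def by blast
    obtain x where x: "valid_values r K x" "ELR N K x q = gv N K q / (1 + gv N K q)"
      using lower[OF assms(3) assms(2) q(3) q(2)] by blast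
    have "ELR N K x q \<in> Es" unfolding Es_def using x q by blast
    hence "g / (1 + g) \<le> \<eta>" unfolding \<eta>_def et using Ebdd x q by (metis cSup_upper)
    moreover have "0 \<le> g" using q gv_nonneg by simp
    ultimately have "g \<le> \<eta> * (1 + g)" by (simp add: divide_simps)
    hence "g * (1 - \<eta>) \<le> \<eta>" by (simp add: algebra_simps)
    thus ?thesis using eta1 unfolding \<eta>_def by (simp add: divide_simps)
  qed
  hence "\<gamma> \<le> \<eta> / (1 - \<eta>)" unfolding \<gamma>_def gam using Gne by (intro cSup_least) auto
  hence "\<gamma> * (1 - \<eta>) \<le> \<eta>" using eta1 unfolding \<eta>_def by (simp add: divide_simps)
  hence "\<gamma> \<le> \<eta> * (1 + \<gamma>)" by (simp add: algebra_simps)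
  hence "\<gamma> / (1 + \<gamma>) \<le> \<eta>" using g0 unfolding \<gamma>_def by (simp add: divide_simps)
  thus ?thesis using etale unfolding \<eta>_def \<gamma>_def by simp
qed


end
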